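(* Let $n\ge 2$ and let $(G(k))_{k\in\mathbb{N}}$ be a sequence of digraphs on $\mathcal{V}=\{1,\dots,n\}$ with knowledge sets evolving by the flooding update described in the context. Define $$\psi(k)=\begin{cases} n & \text{if } k\le \lceil n/2\rceil-1,\\ n-k & \text{if } k\ge \lceil n/2\rceil.\end{cases}$$ If for every $k\in\{0,1,\dots,n-2\}$ the digraph $G(k)$ contains $\psi(k)(k)$ (i.e. every node $i\in\mathcal{V}$ has, at time $k$, a closed input-cord of cardinality greater than $\psi(k)-2$), then $|\mathcal{K}_i(k+1)|\ge k+2$ for all $i\in\mathcal{V}$ and all $k\in\{0,1,\dots,n-2\}$.
   Context: Network: $\mathcal{V}=\{1,\dots,n\}$; node $i$ holds initial data $d_i\in\mathbb{R}$, pairwise distinct. At discrete times $k\in\mathbb{N}$ communication follows digraph $G(k)=(\mathcal{V},\mathcal{E}(k))$; node $i$ sends to $j$ at time $k$ iff $(i,j)\in\mathcal{E}(k)$. Knowledge sets: $\mathcal{K}_i(0)=\{d_i\}$ and $\mathcal{K}_j(k+1)=\mathcal{K}_j(k)\cup\bigcup_{i:(i,j)\in\mathcal{E}(k)}\mathcal{K}_i(k)$. An input-cord to node $i$ at time $k$ is an ordered list $(\mathcal{I}^i_1,\dots,\mathcal{I}^i_m)$ of pairwise distinct nodes of $\mathcal{V}\setminus\{i\}$ with $(\mathcal{I}^i_j,\mathcal{I}^i_{j+1})\in\mathcal{E}(k)$ for $j=1,\dots,m-1$ and $(\mathcal{I}^i_m,i)\in\mathcal{E}(k)$; its cardinality is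 $m$. It is closed if moreover $(i,\mathcal{I}^i_1)\in\mathcal{E}(k)$. For an integer $\chi$, node $i$ is contained in a $\chi(k)$-cycle if it has at time $k$ a closed input-cord of cardinality greater than $\chi-2$; $G(k)$ contains $\chi(k)$ if every node of $\mathcal{V}$ is contained in a $\chi(k)$-cycle. *)

theory Defs
  imports Complex_Main
begin

text \<open>Nodes are the naturals 1..n; E k is the edge set of G(k); d gives the initial data.\<close>

primrec know :: "(nat \<Rightarrow> (nat \<times> nat) set) \<Rightarrow> (nat \<Rightarrow> real) \<Rightarrow> nat \<Rightarrow> nat \<Rightarrow> real set" where
  "know E d j 0 = {d j}"
| "know E d j (Suc k) = know E d j k \<union> (\<Union>i\<in>{i. (i, j) \<in> E k}. know E d i k)"

definition input_cord :: "nat \<Rightarrow> (nat \<times> nat) set \<Rightarrow> nat \<Rightarrow> nat list \<Rightarrow> bool" where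
  "input_cord n Ek i xs \<longleftrightarrow>
     xs \<noteq> [] \<and> distinct xs \<and> set xs \<subseteq> {1..n} - {i} \<and>
     (\<forall>j. Suc j < length xs \<longrightarrow> (xs ! j, xs ! Suc j) \<in> Ek) \<and>
     (last xs, i) \<in> Ek"

definition closed_input_cord :: "nat \<Rightarrow> (nat \<times> nat) set \<Rightarrow> nat \<Rightarrow> nat list \<Rightarrow> bool" where
  "closed_input_cord n Ek i xs \<longleftrightarrow> input_cord n Ek i xs \<and> (i, hd xs) \<in> Ek"

definition in_chi_cycle :: "nat \<Rightarrow> (nat \<times> nat) set \<Rightarrow> int \<Rightarrow> nat \<Rightarrow> bool" where
  "in_chi_cycle n Ek \<chi> i \<longleftrightarrow> (\<exists>xs. closed_input_cord n Ek i xs \<and> int (length xs) > \<chi> - 2)"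

definition contains_chi :: "nat \<Rightarrow> (nat \<times> nat) set \<Rightarrow> int \<Rightarrow> bool" where
  "contains_chi n Ek \<chi> \<longleftrightarrow> (\<forall>i\<in>{1..n}. in_chi_cycle n Ek \<chi> i)"

definition psi :: "nat \<Rightarrow> nat \<Rightarrow> int" where
  "psi n k = (if int k \<le> \<lceil>real n / 2\<rceil> - 1 then int n else int n - int k)"

end

theory Submission
  imports Defs
begin

lemma know_finite:
  assumes "\<And>k. E k \<subseteq> {1..n} \<times> {1..n}"
  shows "finite (know E d j t)"
proof (induction t arbitrary: j)
  case 0 then show ?case by simp
next
  case (Suc t)
  have "{i. (i, j) \<in> E t} \<subseteq> {1..n}" using assms by blast
  hence "finite {i. (i, j) \<in> E t}" using finite_subset by blast
  then show ?case using Suc by simp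
qed

lemma know_mono:
  assumes "t \<le> t'"
  shows "know E d j t \<subseteq> know E d j t'"
  using assms
proof (induction t' rule: dec_induct)
  case base then show ?case by simp
next
  case (step m) then show ?case by auto
qed

lemma cord_edge:
  assumes "closed_input_cord n Ek i xs" "P i" "\<exists>x\<in>set xs. \<not> P x"
  shows "\<exists>c q. P c \<and> \<not> P q \<and> (q, c) \<in> Ek \<and> q \<in> set xs"
proof -
  have ci: "xs \<noteq> []" "\<forall>j. Suc j < length xs \<longrightarrow> (xs ! j, xs ! Suc j) \<in> Ek"
    "(last xs, i) \<in> Ek"
    using assms(1) unfolding closed_input_cord_def input_cord_def by auto
  define R where "R = {r. r < length xs \<and> \<not> P (xs ! r)}"
  have fin: "finite R" unfolding R_def by simp
  have ne: "R \<noteq> {}" using assms(3) unfolding R_def by (auto simp: in_set_conv_nth)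
  define r where "r = Max R"
  have rR: "r \<in> R" using fin ne r_def by simp
  have rmax: "\<And>s. s \<in> R \<Longrightarrow> s \<le> r" using fin r_def by simp
  show ?thesis
  proof (cases "Suc r < length xs")
    case True
    have "Suc r \<notin> R" using rmax by fastforce
    hence "P (xs ! Suc r)" using True unfolding R_def by simp
    moreover have "(xs ! r, xs ! Suc r) \<in> Ek" using ci True by simp
    ultimately show ?thesis using rR unfolding R_def by (metis (mono_tags) mem_Collect_eq nth_mem)
  next
    case False
    hence "r = length xs - 1" using rR unfolding R_def by (simp, linarith)
    hence "last xs = xs ! r" using ci(1) by (simp add: last_conv_nth)
    then show ?thesis using rR ci(3) assms(2) unfolding R_def by (metis (mono_tags) mem_Collect_eq nth_mem)
  qed
qed

theorem theorem1:
  fixes n :: nat and E :: "nat \<Rightarrow> (nat \<times> nat) set" and d :: "nat \<Rightarrow> real"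
  assumes "n \<ge> 2"
    and "\<And>k. E k \<subseteq> {1..n} \<times> {1..n}"
    and "inj_on d {1..n}"
    and "\<And>k. k \<le> n - 2 \<Longrightarrow> contains_chi n (E k) (psi n k)"
  shows "\<forall>i\<in>{1..n}. \<forall>k\<le>n - 2. card (know E d i (Suc k)) \<ge> k + 2"
proof (intro ballI allI impI, rule ccontr)
  fix i k
  assume i: "i \<in> {1..n}" and k: "k \<le> n - 2" and neg: "\<not> k + 2 \<le> card (know E d i (Suc k))"
  define A where "A = know E d i (Suc k)"
  have cA: "card A \<le> k + 1" using neg A_def by simp
  have finA: "finite A" unfolding A_def using know_finite[OF assms(2)] .
  define S where "S t = {j\<in>{1..n}. know E d j t \<subseteq> A}" for t
  have iS: "i \<in> S t" if "t \<le> Suc k" for t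
    using i know_mono[OF that] unfolding S_def A_def by auto
  have finS: "finite (S t)" for t unfolding S_def by simp
  have Smono: "S (Suc t) \<subseteq> S t" for t unfolding S_def by auto
  have psi_ge: "psi n t \<ge> int n - int t" for t unfolding psi_def by auto
  have step: "card (S (Suc t)) < card (S t)" if t: "t \<le> k" and small: "card (S t) + t \<le> k + 1" for t
  proof -
    have tn: "t \<le> n - 2" using t k by simp
    have "in_chi_cycle n (E t) (psi n t) i"
      using assms(4)[OF tn] i unfolding contains_chi_def by blast
    then obtain xs where xs: "closed_input_cord n (E t) i xs" "int (length xs) > psi n t - 2"
      unfolding in_chi_cycle_def by blast
    have dist: "distinct xs" "i \<notin> set xs" "set xs \<subseteq> {1..n}"
      using xs(1) unfolding closed_input_cord_def input_cord_def by auto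
    have cardC: "card (insert i (set xs)) = length xs + 1"
      using dist by (simp add: distinct_card)
    have "int (card (S t)) < int (card (insert i (set xs)))"
      using cardC xs(2) psi_ge[of t] small k assms(1) by linarith
    hence "\<not> insert i (set xs) \<subseteq> S t"
      using finS card_mono by (metis not_less of_nat_le_iff)
    hence "\<exists>x\<in>set xs. \<not> x \<in> S t" using iS t by auto
    then obtain c q where cq: "c \<in> S t" "q \<notin> S t" "(q, c) \<in> E t" "q \<in> set xs"
      using cord_edge[OF xs(1), of "\<lambda>x. x \<in> S t"] iS t by auto
    have "q \<in> {1..n}" using cq(4) dist(3) by auto
    hence "\<not> know E d q t \<subseteq> A" using cq(2) unfolding S_def by auto
    moreover have "know E d q t \<subseteq> know E d c (Suc t)" using cq(3) by auto
    ultimately have "c \<notin> S (Suc t)" unfolding S_def by auto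
    hence "S (Suc t) \<subset> S t" using Smono cq(1) by blast
    then show ?thesis using finS psubset_card_mono by blast
  qed
  have S0: "card (S 0) \<le> k + 1"
  proof -
    have "d ` S 0 \<subseteq> A" unfolding S_def by auto
    moreover have "inj_on d (S 0)" using assms(3) unfolding S_def by (rule inj_on_subset) auto
    ultimately have "card (S 0) \<le> card A" using finA by (metis card_image card_mono)
    then show ?thesis using cA by simp
  qed
  have main: "card (S t) + t \<le> k + 1" if "t \<le> Suc k" for t
    using that
  proof (induction t)
    case 0 then show ?case using S0 by simp
  next
    case (Suc t)
    then have "card (S t) + t \<le> k + 1" by simp
    with step[of t] Suc.prems show ?case by simp
  qed
  have "card (S (Suc k)) = 0" using main[of "Suc k"] by simp
  then show False using iS[of "Suc k"] finS by auto
qed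

end
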